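(* A linear functional $H:\underline{\mathcal Z}\to\mathcal Y$ has a formal convolution representation if and only if it has the minimal FMP and is minimally continuous.
   Context: Let $(\mathcal Z,\|\cdot\|)$ and $(\mathcal Y,\|\cdot\|_{\mathcal Y})$ be normed vector spaces over $\mathbb R$ and $\mathcal B=\{z\in\mathcal Z:\|z\|\le1\}$. Let $\mathbb Z_-=\{0,-1,-2,\dots\}$; elements of $\mathcal Z^{\mathbb Z_-}$ are sequences $\underline z=(z_t)_{t\le0}$. For $t\in\mathbb Z_-$, $\delta^t:\mathcal Z\to\mathcal Z^{\mathbb Z_-}$ maps $z$ to the sequence whose entry at time $t$ is $z$ and all other entries are $0$. Standing assumption: $\underline{\mathcal Z}\subseteq\mathcal Z^{\mathbb Z_-}$ is a set such that (a) $\underline{\mathcal Z}$ is convex and $\underline{\mathcal Z}=\{-\underline z:\underline z\in\underline{\mathcal Z}\}$; (b) $\delta^t(\mathcal B)\subseteq\underline{\mathcal Z}$ for all $t\in\mathbb Z_-$; (c) for every $\underline z\in\underline{\mathcal Z}$ and every $J\subseteq\mathbb Z_-$, the sequence $\sum_{t\in J}\delta^t(z_t)$ (equal to $z_t$ at times $t\in J$ and $0$ elsewhere) belongs to $\underline{\mathcal Z}$. A functional $H:\underline{\mathcal Z}\to\mathcal Y$ is linear if it is the restriction of a linear map defined on the linear span of $\underline{\mathcal Z}$. $L(\mathcal Z,\mathcal Y)$ is the space of continuous linear maps $\mathcal Z\to\mathcal Y$. $H$ has a formal convolution representation if there is $\underline\kappa\in L(\mathcal Z,\mathcal Y)^{\mathbb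 Z_-}$ with $H(\underline z)=\lim_{T\to-\infty}\sum_{t=T}^0\kappa_t(z_t)$ for all $\underline z\in\underline{\mathcal Z}$. $H$ is minimally continuous if $H\circ\delta^t:\mathcal B\to\mathcal Y$ is continuous for every $t\in\mathbb Z_-$. $H$ has the minimal fading memory property (minimal FMP) if $H(\sum_{t=T}^0\delta^t(z_t))\to H(\underline z)$ as $T\to-\infty$ for every $\underline z\in\underline{\mathcal Z}$. *)

theory Defs
  imports "HOL-Analysis.Analysis"
begin

text \<open>Sequences indexed by Z_- = {0,-1,-2,...} are encoded as functions nat => 'z,
  where the value at index n is the entry at time -n.\<close>

definition delta :: "nat \<Rightarrow> 'z::real_normed_vector \<Rightarrow> (nat \<Rightarrow> 'z)" where
  "delta t z = (\<lambda>s. if s = t then z else 0)"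

definition admissible_seq_set :: "(nat \<Rightarrow> 'z::real_normed_vector) set \<Rightarrow> bool" where
  "admissible_seq_set Z \<longleftrightarrow>
     (\<forall>u\<in>Z. \<forall>v\<in>Z. \<forall>a::real. 0 \<le> a \<and> a \<le> 1 \<longrightarrow> (\<lambda>t. a *\<^sub>R u t + (1 - a) *\<^sub>R v t) \<in> Z)
   \<and> (\<forall>u\<in>Z. (\<lambda>t. - u t) \<in> Z)
   \<and> (\<forall>t z. norm z \<le> 1 \<longrightarrow> delta t z \<in> Z)
   \<and> (\<forall>u\<in>Z. \<forall>J. (\<lambda>s. if s \<in> J then u s else 0) \<in> Z)"

definition seq_span :: "(nat \<Rightarrow> 'z::real_normed_vector) set \<Rightarrow> (nat \<Rightarrow> 'z) set" where
  "seq_span Z = {u. \<exists>S c. finite S \<and> S \<subseteq> Z \<and> u = (\<lambda>t. \<Sum>v\<in>S. c v *\<^sub>R v t)}"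

definition linear_functional ::
  "(nat \<Rightarrow> 'z::real_normed_vector) set \<Rightarrow> ((nat \<Rightarrow> 'z) \<Rightarrow> 'y::real_normed_vector) \<Rightarrow> bool" where
  "linear_functional Z H \<longleftrightarrow>
     (\<exists>L. (\<forall>u\<in>seq_span Z. \<forall>v\<in>seq_span Z. \<forall>a b::real.
             L (\<lambda>t. a *\<^sub>R u t + b *\<^sub>R v t) = a *\<^sub>R L u + b *\<^sub>R L v)
        \<and> (\<forall>u\<in>Z. H u = L u))"

definition formal_convolution_rep ::
  "(nat \<Rightarrow> 'z::real_normed_vector) set \<Rightarrow> ((nat \<Rightarrow> 'z) \<Rightarrow> 'y::real_normed_vector) \<Rightarrow> bool" where
  "formal_convolution_rep Z H \<longleftrightarrow>
     (\<exists>\<kappa> :: nat \<Rightarrow> 'z \<Rightarrow> 'y. (\<forall>t. bounded_linear (\<kappa> t))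
        \<and> (\<forall>u\<in>Z. (\<lambda>T. \<Sum>t\<le>T. \<kappa> t (u t)) \<longlonglongrightarrow> H u))"

definition minimally_continuous ::
  "((nat \<Rightarrow> 'z::real_normed_vector) \<Rightarrow> 'y::real_normed_vector) \<Rightarrow> bool" where
  "minimally_continuous H \<longleftrightarrow> (\<forall>t. continuous_on (cball 0 1) (\<lambda>z. H (delta t z)))"

definition minimal_FMP ::
  "(nat \<Rightarrow> 'z::real_normed_vector) set \<Rightarrow> ((nat \<Rightarrow> 'z) \<Rightarrow> 'y::real_normed_vector) \<Rightarrow> bool" where
  "minimal_FMP Z H \<longleftrightarrow>
     (\<forall>u\<in>Z. (\<lambda>T. H (\<lambda>s. if s \<le> T then u s else 0)) \<longlonglongrightarrow> H u)"

end

theory Submission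
  imports Defs
begin

lemma bl_from_cont:
  fixes g :: "'a::real_normed_vector \<Rightarrow> 'b::real_normed_vector"
  assumes add: "\<And>x y. g (x + y) = g x + g y"
    and sc: "\<And>r x. g (r *\<^sub>R x) = r *\<^sub>R g x"
    and c: "continuous_on (cball 0 1) g"
  shows "bounded_linear g"
proof -
  have g0: "g 0 = 0" using sc[of 0 0] by simp
  obtain d where d: "d > 0" "\<And>x'. x' \<in> cball 0 1 \<Longrightarrow> dist x' 0 < d \<Longrightarrow> dist (g x') (g 0) < 1"
  proof -
    have "\<forall>e>0. \<exists>d>0. \<forall>x'\<in>cball 0 1. dist x' 0 < d \<longrightarrow> dist (g x') (g 0) < e"
      using bspec[OF c[unfolded continuous_on_iff], of 0] by simp
    then obtain d where "d > 0" "\<forall>x'\<in>cball 0 1. dist x' 0 < d \<longrightarrow> dist (g x') (g 0) < 1"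
      using zero_less_one by blast
    thus ?thesis using that by blast
  qed
  define e where "e = min d 1 / 2"
  have e: "e > 0" "e < d" "e \<le> 1" using d(1) by (auto simp: e_def)
  show ?thesis
  proof (rule bounded_linear_intro[OF add sc])
    fix x :: 'a
    show "norm (g x) \<le> norm x * (1 / e)"
    proof (cases "x = 0")
      case True thus ?thesis using g0 by simp
    next
      case False
      hence nx: "norm x > 0" by simp
      define x' where "x' = (e / norm x) *\<^sub>R x"
      have nx': "norm x' = e" using nx e by (simp add: x'_def)
      have "dist (g x') (g 0) < 1" using d(2)[of x'] nx' e by simp
      hence "norm (g x') < 1" using g0 by simp
      moreover have "g x' = (e / norm x) *\<^sub>R g x" by (simp add: x'_def sc)
      ultimately have "(e / norm x) * norm (g x) < 1" using e nx by simp
      hence "e * norm (g x) < norm x" using nx by (simp add: field_simps)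
      thus ?thesis using e by (simp add: field_simps)
    qed
  qed
qed

theorem lemma3p3:
  fixes Z :: "(nat \<Rightarrow> 'z::real_normed_vector) set"
    and H :: "(nat \<Rightarrow> 'z) \<Rightarrow> 'y::real_normed_vector"
  assumes "admissible_seq_set Z"
    and "linear_functional Z H"
  shows "formal_convolution_rep Z H \<longleftrightarrow> minimal_FMP Z H \<and> minimally_continuous H"
proof -
  have trunc: "\<And>u J. u \<in> Z \<Longrightarrow> (\<lambda>s. if s \<in> J then u s else 0) \<in> Z"
    and dZ: "\<And>t z. norm z \<le> 1 \<Longrightarrow> delta t z \<in> Z"
    using assms(1) unfolding admissible_seq_set_def by blast+
  have trunc': "\<And>u T. u \<in> Z \<Longrightarrow> (\<lambda>s. if s \<le> T then u s else 0) \<in> Z"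
    using trunc[of _ "{..T}" for T] by simp
  show ?thesis
  proof
    assume "formal_convolution_rep Z H"
    then obtain \<kappa> where bl: "\<And>t. bounded_linear (\<kappa> t)"
      and lim: "\<And>u. u \<in> Z \<Longrightarrow> (\<lambda>T. \<Sum>t\<le>T. \<kappa> t (u t)) \<longlonglongrightarrow> H u"
      unfolding formal_convolution_rep_def by blast
    have z0: "\<And>t. \<kappa> t 0 = 0" using bl linear_simps(3) by blast
    have fin: "H v = (\<Sum>t\<le>N. \<kappa> t (v t))" if "v \<in> Z" "\<And>s. s > N \<Longrightarrow> v s = 0" for v N
    proof -
      have ev: "eventually (\<lambda>T. (\<Sum>t\<le>T. \<kappa> t (v t)) = (\<Sum>t\<le>N. \<kappa> t (v t))) sequentially"
        unfolding eventually_sequentially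
      proof (intro exI allI impI)
        fix T assume "N \<le> T"
        have "(\<Sum>t\<le>T. \<kappa> t (v t)) = (\<Sum>t\<le>N. \<kappa> t (v t)) + (\<Sum>t\<in>{N<..T}. \<kappa> t (v t))"
          using \<open>N \<le> T\<close>
          by (metis (no_types, lifting) atLeast0AtMost finite_atMost ivl_disj_int_two(8) ivl_disj_un_two(8) le0 sum.union_disjoint finite_greaterThanAtMost)
        also have "(\<Sum>t\<in>{N<..T}. \<kappa> t (v t)) = 0" using that(2) z0 by (intro sum.neutral) auto
        finally show "(\<Sum>t\<le>T. \<kappa> t (v t)) = (\<Sum>t\<le>N. \<kappa> t (v t))" by simp
      qed
      have "(\<lambda>T. \<Sum>t\<le>N. \<kappa> t (v t)) \<longlonglongrightarrow> H v"
        using tendsto_cong[OF ev] lim[OF that(1)] by simp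
      thus ?thesis using LIMSEQ_const_iff by metis
    qed
    show "minimal_FMP Z H \<and> minimally_continuous H"
    proof
      show "minimal_FMP Z H" unfolding minimal_FMP_def
      proof
        fix u assume u: "u \<in> Z"
        have "H (\<lambda>s. if s \<le> T then u s else 0) = (\<Sum>t\<le>T. \<kappa> t (u t))" for T
          using fin[OF trunc'[OF u], of T] by (intro trans[OF fin[OF trunc'[OF u], of T]] sum.cong) auto
        thus "(\<lambda>T. H (\<lambda>s. if s \<le> T then u s else 0)) \<longlonglongrightarrow> H u" using lim[OF u] by simp
      qed
      show "minimally_continuous H" unfolding minimally_continuous_def
      proof
        fix t
        have "H (delta t z) = \<kappa> t z" if "z \<in> cball 0 1" for z
        proof -
          have "H (delta t z) = (\<Sum>s\<le>t. \<kappa> s (delta t z s))"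
            using that by (intro fin dZ) (auto simp: delta_def)
          also have "\<dots> = \<kappa> t z" using z0
            by (subst sum.remove[of _ t]) (auto simp: delta_def intro!: sum.neutral)
          finally show ?thesis .
        qed
        thus "continuous_on (cball 0 1) (\<lambda>z. H (delta t z))"
          using continuous_on_cong linear_continuous_on[OF bl[of t]] by (metis (no_types, lifting))
      qed
    qed
  next
    assume asm: "minimal_FMP Z H \<and> minimally_continuous H"
    obtain L where Llin: "\<And>u v a b. u \<in> seq_span Z \<Longrightarrow> v \<in> seq_span Z \<Longrightarrow>
         L (\<lambda>t. a *\<^sub>R u t + b *\<^sub>R v t) = a *\<^sub>R L u + b *\<^sub>R L v"
      and HL: "\<And>u. u \<in> Z \<Longrightarrow> H u = L u"
      using assms(2) unfolding linear_functional_def by blast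
    have Zspan: "u \<in> seq_span Z" if "u \<in> Z" for u
      unfolding seq_span_def
      by (rule CollectI, rule exI[of _ "{u}"], rule exI[of _ "\<lambda>_. 1"]) (use that in auto)
    have dspan: "delta t z \<in> seq_span Z" for t z
    proof (cases "z = 0")
      case True
      have "delta t z = (\<lambda>s. \<Sum>v\<in>{}. (\<lambda>_. 1) v *\<^sub>R v s)" using True by (auto simp: delta_def)
      thus ?thesis unfolding seq_span_def
        by (intro CollectI exI[of _ "{}"] exI[of _ "\<lambda>_. 1"]) simp
    next
      case False
      have "delta t (z /\<^sub>R norm z) \<in> Z" using False by (intro dZ) simp
      moreover have "delta t z = (\<lambda>s. \<Sum>v\<in>{delta t (z /\<^sub>R norm z)}. (\<lambda>_. norm z) v *\<^sub>R v s)"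
        using False by (auto simp: delta_def)
      ultimately show ?thesis unfolding seq_span_def
        by (intro CollectI exI[of _ "{delta t (z /\<^sub>R norm z)}"] exI[of _ "\<lambda>_. norm z"]) simp
    qed
    define \<kappa> where "\<kappa> t z = L (delta t z)" for t z
    have bl: "bounded_linear (\<kappa> t)" for t
    proof (rule bl_from_cont)
      fix x y :: 'z
      have "delta t (x + y) = (\<lambda>s. 1 *\<^sub>R delta t x s + 1 *\<^sub>R delta t y s)"
        by (auto simp: delta_def)
      thus "\<kappa> t (x + y) = \<kappa> t x + \<kappa> t y" unfolding \<kappa>_def
        using Llin[OF dspan[of t x] dspan[of t y], of 1 1] by simp
    next
      fix r and x :: 'z
      have "delta t (r *\<^sub>R x) = (\<lambda>s. r *\<^sub>R delta t x s + 0 *\<^sub>R delta t x s)"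
        by (auto simp: delta_def)
      thus "\<kappa> t (r *\<^sub>R x) = r *\<^sub>R \<kappa> t x" unfolding \<kappa>_def
        using Llin[OF dspan[of t x] dspan[of t x], of r 0] by simp
    next
      have "H (delta t z) = \<kappa> t z" if "z \<in> cball 0 1" for z
        using that HL dZ by (simp add: \<kappa>_def)
      thus "continuous_on (cball 0 1) (\<kappa> t)"
        using asm continuous_on_cong unfolding minimally_continuous_def by (metis (no_types, lifting))
    qed
    have key: "(\<Sum>t\<le>T. \<kappa> t (u t)) = H (\<lambda>s. if s \<le> T then u s else 0)" if u: "u \<in> Z" for u T
    proof (induction T)
      case 0
      have "(\<lambda>s. if s \<le> 0 then u s else 0) = delta 0 (u 0)" by (auto simp: delta_def)
      thus ?case using HL[OF trunc'[OF u, of 0]] by (simp add: \<kappa>_def)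
    next
      case (Suc T)
      have eq: "(\<lambda>s. if s \<le> Suc T then u s else 0) =
        (\<lambda>s. 1 *\<^sub>R (if s \<le> T then u s else 0) + 1 *\<^sub>R delta (Suc T) (u (Suc T)) s)"
        by (auto simp: delta_def)
      have "H (\<lambda>s. if s \<le> Suc T then u s else 0) = L (\<lambda>s. if s \<le> Suc T then u s else 0)"
        using HL[OF trunc'[OF u]] by blast
      also have "\<dots> = L (\<lambda>s. if s \<le> T then u s else 0) + \<kappa> (Suc T) (u (Suc T))"
        unfolding eq \<kappa>_def using Llin[OF Zspan[OF trunc'[OF u, of T]] dspan[of "Suc T" "u (Suc T)"], of 1 1] by simp
      also have "\<dots> = H (\<lambda>s. if s \<le> T then u s else 0) + \<kappa> (Suc T) (u (Suc T))"
        using HL[OF trunc'[OF u]] by simp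
      finally show ?case using Suc by simp
    qed
    show "formal_convolution_rep Z H" unfolding formal_convolution_rep_def
    proof (intro exI conjI allI ballI)
      show "bounded_linear (\<kappa> t)" for t by (rule bl)
      fix u assume "u \<in> Z"
      thus "(\<lambda>T. \<Sum>t\<le>T. \<kappa> t (u t)) \<longlonglongrightarrow> H u"
        using asm key unfolding minimal_FMP_def by simp
    qed
  qed
qed

end
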